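(* For $n=0,1,2,\ldots$ let $R_n=\sum_{k=0}^n\binom{n}{k}\binom{n+k}{k}\frac{1}{2k-1}$. Then the sequence $\{\sqrt[n]{R_n}\}_{n=1}^\infty$ is strictly increasing, and $\lim_{n\to\infty}\sqrt[n]{R_n}=3+2\sqrt{2}$. *)

theory Defs
  imports "HOL-Analysis.Analysis"
begin

definition R :: "nat \<Rightarrow> real" where
  "R n = (\<Sum>k=0..n. real (n choose k) * real ((n + k) choose k) * (1 / (2 * real k - 1)))"

end

theory Submission
  imports Defs
begin


definition a :: "nat \<Rightarrow> nat \<Rightarrow> real" where
  "a n k = real (n choose k) * real ((n + k) choose k)"

lemma fact3: "(fact (m + 3) :: real) = fact m * (real m + 1) * (real m + 2) * (real m + 3)"
proof -
  have "m + 3 = Suc (Suc (Suc m))" by simp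
  then show ?thesis by (simp only:) (simp add: fact_Suc algebra_simps)
qed
lemma fact2: "(fact (m + 2) :: real) = fact m * (real m + 1) * (real m + 2)"
proof -
  have "m + 2 = Suc (Suc m)" by simp
  then show ?thesis by (simp only:) (simp add: fact_Suc algebra_simps)
qed
lemma fact1: "(fact (m + 1) :: real) = fact m * (real m + 1)"
  by (simp add: algebra_simps)

lemma a_fact: assumes "k \<le> m" shows "a m k = fact (m + k) / (fact k ^ 2 * fact (m - k))"
proof -
  have "real (m choose k) = fact m / (fact k * fact (m - k))" using binomial_fact[OF assms] by simp
  moreover have "real ((m + k) choose k) = fact (m+k) / (fact k * fact m)"
    using binomial_fact[of k "m+k"] by simp
  ultimately have "a m k = (fact m / (fact k * fact (m - k))) * (fact (m+k) / (fact k * fact m))"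
    unfolding a_def by simp
  then show ?thesis by (simp add: field_simps power2_eq_square)
qed

lemma a0: assumes "k \<le> n + 3" 
  shows "a n k * fact k ^ 2 * fact (n + 3 - k) = fact (n + k) * ((real n + 1 - real k) * (real n + 2 - real k) * (real n + 3 - real k))"
proof (cases "k \<le> n")
  case True
  have e0: "n + 3 - k = (n - k) + 3" using True by simp
  have e2: "real (n - k) = real n - real k" using True by simp
  have "a n k * fact k ^ 2 * fact (n + 3 - k) = fact (n + k) * (fact (n + 3 - k) / fact (n - k))"
    unfolding a_fact[OF True] by (simp add: field_simps)
  also have "\<dots> = fact (n + k) * ((real n + 1 - real k) * (real n + 2 - real k) * (real n + 3 - real k))"
    unfolding e0 fact3 e2 by (simp add: field_simps)
  finally show ?thesis .
next
  case False
  then have "k = n + 1 \<or> k = n + 2 \<or> k = n + 3" using assms by linarith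
  moreover have "a n k = 0" using False by (simp add: a_def)
  ultimately show ?thesis by auto
qed

lemma a1: assumes "k \<le> n + 3" 
  shows "a (n+1) k * fact k ^ 2 * fact (n + 3 - k) = fact (n + k) * ((real n + real k + 1) * (real n + 2 - real k) * (real n + 3 - real k))"
proof (cases "k \<le> n + 1")
  case True
  have e0: "n + 3 - k = (n + 1 - k) + 2" using True by simp
  have e1: "n + 1 + k = (n + k) + 1" by simp
  have e2: "real (n + 1 - k) = real n + 1 - real k" using True by simp
  have "a (n+1) k * fact k ^ 2 * fact (n + 3 - k) = fact (n + 1 + k) * (fact (n + 3 - k) / fact (n + 1 - k))"
    unfolding a_fact[OF True] by (simp add: field_simps)
  also have "\<dots> = fact (n + k) * ((real n + real k + 1) * (real n + 2 - real k) * (real n + 3 - real k))"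
    unfolding e0 e1 fact2 fact1 e2 by (simp add: field_simps)
  finally show ?thesis .
next
  case False
  then have "k = n + 2 \<or> k = n + 3" using assms by linarith
  moreover have "a (n+1) k = 0" using False by (simp add: a_def)
  ultimately show ?thesis by auto
qed

lemma a2: assumes "k \<le> n + 3" 
  shows "a (n+2) k * fact k ^ 2 * fact (n + 3 - k) = fact (n + k) * ((real n + real k + 1) * (real n + real k + 2) * (real n + 3 - real k))"
proof (cases "k \<le> n + 2")
  case True
  have e0: "n + 3 - k = (n + 2 - k) + 1" using True by simp
  have e1: "n + 2 + k = (n + k) + 2" by simp
  have e2: "real (n + 2 - k) = real n + 2 - real k" using True by simp
  have "a (n+2) k * fact k ^ 2 * fact (n + 3 - k) = fact (n + 2 + k) * (fact (n + 3 - k) / fact (n + 2 - k))"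
    unfolding a_fact[OF True] by (simp add: field_simps)
  also have "\<dots> = fact (n + k) * ((real n + real k + 1) * (real n + real k + 2) * (real n + 3 - real k))"
    unfolding e0 e1 fact2 fact1 e2 by (simp add: field_simps)
  finally show ?thesis .
next
  case False
  then have "k = n + 3" using assms by linarith
  moreover have "a (n+2) k = 0" using False by (simp add: a_def)
  ultimately show ?thesis by auto
qed

lemma a3: assumes "k \<le> n + 3" 
  shows "a (n+3) k * fact k ^ 2 * fact (n + 3 - k) = fact (n + k) * ((real n + real k + 1) * (real n + real k + 2) * (real n + real k + 3))"
proof -
  have e1: "n + 3 + k = (n + k) + 3" by simp
  have "a (n+3) k * fact k ^ 2 * fact (n + 3 - k) = fact (n + 3 + k)"
    unfolding a_fact[OF assms] by (simp add: field_simps)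
  also have "\<dots> = fact (n + k) * ((real n + real k + 1) * (real n + real k + 2) * (real n + real k + 3))"
    unfolding e1 fact3 by (simp add: field_simps)
  finally show ?thesis .
qed


definition g :: "nat \<Rightarrow> nat \<Rightarrow> real" where
  "g n k = (if k = 0 then 0 else -4 * real ((n+k) choose (k-1)) * real ((n+2) choose (k-1)))"

lemma g1: assumes "1 \<le> k" "k \<le> n + 3"
  shows "g n k * fact k ^ 2 * fact (n + 3 - k) = -4 * fact (n + k) * real k ^ 2 * (real n + 2)"
proof -
  obtain j where j: "k = Suc j" using assms(1) by (cases k) auto
  have h1: "real ((n + k) choose (k - 1)) = fact (n+k) / (fact j * fact (n + 1))"
    using binomial_fact[of j "n+k"] j by simp
  have h2: "real ((n + 2) choose (k - 1)) = fact (n+2) / (fact j * fact (n + 3 - k))"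
    using binomial_fact[of j "n+2"] j assms by (simp add: Suc_diff_le)
  have e: "n + 3 - k = n + 2 - j" using j by simp
  have "g n k * fact k ^ 2 * fact (n + 3 - k) = -4 * fact (n+k) * (fact (n+2) / fact (n+1)) * (fact k / fact j)^2"
  proof -
    have gk: "g n k = -4 * real ((n + k) choose (k - 1)) * real ((n + 2) choose (k - 1))"
      using j by (simp add: g_def)
    have nz: "(fact (n + 3 - k)::real) \<noteq> 0" "(fact j::real) \<noteq> 0" "(fact (n+1)::real) \<noteq> 0" by auto
    have alg: "\<And>A B C D E K::real. B \<noteq> 0 \<Longrightarrow> C \<noteq> 0 \<Longrightarrow> D \<noteq> 0 \<Longrightarrow>
       -4 * (A / (B*C)) * (E / (B*D)) * K^2 * D = -4 * A * (E/C) * (K/B)^2"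
      by (simp add: field_simps power2_eq_square)
    show ?thesis unfolding gk h1 h2 by (rule alg[OF nz(2) nz(3) nz(1)])
  qed
  also have "\<dots> = -4 * fact (n + k) * real k ^ 2 * (real n + 2)"
  proof -
    have "fact (n+2) / fact (n+1) = (real n + 2 :: real)"
      by (metis add_2_eq_Suc' fact_Suc fact_nonzero nonzero_mult_div_cancel_right of_nat_Suc add.commute Suc_eq_plus1 add_Suc_right numeral_2_eq_2 of_nat_add of_nat_numeral)
    moreover have "fact k / fact j = (real k :: real)" using j by simp
    ultimately show ?thesis by simp
  qed
  finally show ?thesis .
qed


lemma fact_ratio1: "(fact (m+1) :: real) / fact m = real m + 1"
  by simp

lemma g2: assumes "k \<le> n + 3"
  shows "g n (k+1) * fact k ^ 2 * fact (n + 3 - k) = -4 * fact (n + k) * (real n + real k + 1) * (real n + 2) * (real n + 3 - real k)"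
proof (cases "k \<le> n + 2")
  case True
  have h1: "real ((n + (k+1)) choose k) = fact (n+k+1) / (fact k * fact (n + 1))"
    using binomial_fact[of k "n+k+1"] by simp
  have h2: "real ((n + 2) choose k) = fact (n+2) / (fact k * fact (n + 2 - k))"
    using binomial_fact[of k "n+2"] True by simp
  have gk: "g n (k+1) = -4 * real ((n + (k+1)) choose k) * real ((n + 2) choose k)"
    by (simp add: g_def)
  have nz: "(fact (n + 2 - k)::real) \<noteq> 0" "(fact k::real) \<noteq> 0" "(fact (n+1)::real) \<noteq> 0" by auto
  have alg: "\<And>A B C D E K F::real. B \<noteq> 0 \<Longrightarrow> C \<noteq> 0 \<Longrightarrow> D \<noteq> 0 \<Longrightarrow>
       -4 * (A / (B*C)) * (E / (B*D)) * B^2 * F = -4 * A * (E/C) * (F/D)"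
    by (simp add: field_simps power2_eq_square)
  have "g n (k+1) * fact k ^ 2 * fact (n + 3 - k) = -4 * fact (n+k+1) * (fact (n+2) / fact (n+1)) * (fact (n+3-k) / fact (n+2-k))"
    unfolding gk h1 h2 by (rule alg[OF nz(2) nz(3) nz(1)])
  also have "\<dots> = -4 * fact (n + k) * (real n + real k + 1) * (real n + 2) * (real n + 3 - real k)"
  proof -
    have e1: "fact (n+k+1) = (fact (n+k) :: real) * (real n + real k + 1)" by (simp add: algebra_simps)
    have e2: "(fact (n+2) :: real) / fact (n+1) = real n + 2"
      using fact_ratio1[of "n+1"] by (simp add: add.assoc)
    have e3: "(fact (n+3-k) :: real) / fact (n+2-k) = real n + 3 - real k"
    proof -
      have "n + 3 - k = (n + 2 - k) + 1" using True by simp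
      then have "(fact (n+3-k) :: real) / fact (n+2-k) = real (n + 2 - k) + 1"
        using fact_ratio1[of "n+2-k"] by simp
      also have "\<dots> = real n + 3 - real k" using True by (simp add: of_nat_diff)
      finally show ?thesis .
    qed
    show ?thesis unfolding e1 e2 e3 by (simp add: algebra_simps)
  qed
  finally show ?thesis .
next
  case False
  then have k: "k = n + 3" using assms by linarith
  then show ?thesis by (simp add: g_def)
qed


definition tt :: "nat \<Rightarrow> nat \<Rightarrow> real" where
  "tt n k = real (n choose k) * real ((n + k) choose k) * (1 / (2 * real k - 1))"

lemma tt_a: "tt m k = a m k / (2 * real k - 1)"
  by (simp add: tt_def a_def)

lemma twok: "2 * real k - 1 \<noteq> 0"
proof
  assume "2 * real k - 1 = 0"
  then have "real (2 * k) = real 1" by simp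
  then have "2 * k = 1" by (simp only: of_nat_eq_iff)
  then show False by presburger
qed

lemma term_id: assumes "k \<le> n + 3"
  shows "(real n + 3) * tt (n+3) k - (7 * real n + 13) * tt (n+2) k + (7 * real n + 15) * tt (n+1) k - (real n + 1) * tt n k
         = g n (k+1) - g n k"
proof (cases "k = 0")
  case True
  then show ?thesis by (simp add: tt_def g_def)
next
  case False
  define c where "c = 2 * real k - 1"
  define F where "F = (fact k ^ 2 * fact (n + 3 - k) :: real)"
  have c0: "c \<noteq> 0" unfolding c_def by (rule twok)
  have F0: "F \<noteq> 0" unfolding F_def by simp
  have A0: "a n k * F = fact (n + k) * ((real n + 1 - real k) * (real n + 2 - real k) * (real n + 3 - real k))"
    using a0[OF assms] unfolding F_def by (simp add: mult.assoc)
  have A1: "a (n+1) k * F = fact (n + k) * ((real n + real k + 1) * (real n + 2 - real k) * (real n + 3 - real k))"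
    using a1[OF assms] unfolding F_def by (simp add: mult.assoc)
  have A2: "a (n+2) k * F = fact (n + k) * ((real n + real k + 1) * (real n + real k + 2) * (real n + 3 - real k))"
    using a2[OF assms] unfolding F_def by (simp add: mult.assoc)
  have A3: "a (n+3) k * F = fact (n + k) * ((real n + real k + 1) * (real n + real k + 2) * (real n + real k + 3))"
    using a3[OF assms] unfolding F_def by (simp add: mult.assoc)
  have G0: "g n k * F = -4 * fact (n + k) * real k ^ 2 * (real n + 2)"
    using g1[OF _ assms] False unfolding F_def by (simp add: mult.assoc)
  have G1: "g n (k+1) * F = -4 * fact (n + k) * (real n + real k + 1) * (real n + 2) * (real n + 3 - real k)"
    using g2[OF assms] unfolding F_def by (simp add: mult.assoc)
  have key: "(real n + 3) * (a (n+3) k * F) - (7 * real n + 13) * (a (n+2) k * F) + (7 * real n + 15) * (a (n+1) k * F) - (real n + 1) * (a n k * F)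
      = c * (g n (k+1) * F - g n k * F)"
    unfolding A0 A1 A2 A3 G0 G1 c_def by (simp add: algebra_simps power2_eq_square)
  have alg: "\<And>p3 p2 p1 p0 a3 a2 a1 a0 G1 G0 c F :: real. c \<noteq> 0 \<Longrightarrow> F \<noteq> 0 \<Longrightarrow>
      p3 * (a3 * F) - p2 * (a2 * F) + p1 * (a1 * F) - p0 * (a0 * F) = c * (G1 * F - G0 * F) \<Longrightarrow>
      p3 * (a3 / c) - p2 * (a2 / c) + p1 * (a1 / c) - p0 * (a0 / c) = G1 - G0"
  proof -
    fix p3 p2 p1 p0 a3 a2 a1 a0 G1 G0 c F :: real
    assume c: "c \<noteq> 0" and F: "F \<noteq> 0" and h: "p3 * (a3 * F) - p2 * (a2 * F) + p1 * (a1 * F) - p0 * (a0 * F) = c * (G1 * F - G0 * F)"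
    have "(p3 * a3 - p2 * a2 + p1 * a1 - p0 * a0) * F = (c * (G1 - G0)) * F" using h by (simp add: algebra_simps)
    then have "p3 * a3 - p2 * a2 + p1 * a1 - p0 * a0 = c * (G1 - G0)" using F by simp
    moreover have "p3 * (a3 / c) - p2 * (a2 / c) + p1 * (a1 / c) - p0 * (a0 / c) = (p3 * a3 - p2 * a2 + p1 * a1 - p0 * a0) / c"
      by (simp add: diff_divide_distrib add_divide_distrib)
    ultimately show "p3 * (a3 / c) - p2 * (a2 / c) + p1 * (a1 / c) - p0 * (a0 / c) = G1 - G0"
      using c by simp
  qed
  show ?thesis unfolding tt_a c_def[symmetric] by (rule alg[OF c0 F0 key])
qed


lemma R_tt: "R m = sum (tt m) {0..m}"
  unfolding R_def tt_def by simp

lemma R_ext: assumes "m \<le> M" shows "R m = sum (tt m) {0..M}"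
proof -
  have "sum (tt m) {0..M} = sum (tt m) {0..m}"
    by (rule sum.mono_neutral_right) (use assms in \<open>auto simp: tt_def\<close>)
  then show ?thesis by (simp add: R_tt)
qed

lemma R_rec: "(real n + 3) * R (n+3) = (7 * real n + 13) * R (n+2) - (7 * real n + 15) * R (n+1) + (real n + 1) * R n"
proof -
  let ?S = "{0..n+3}"
  have "(real n + 3) * R (n+3) - (7 * real n + 13) * R (n+2) + (7 * real n + 15) * R (n+1) - (real n + 1) * R n
      = (\<Sum>k\<in>?S. (real n + 3) * tt (n+3) k - (7 * real n + 13) * tt (n+2) k + (7 * real n + 15) * tt (n+1) k - (real n + 1) * tt n k)"
    by (simp add: R_ext[of "n+3" "n+3"] R_ext[of "Suc (Suc n)" "n+3"] R_ext[of "Suc n" "n+3"] R_ext[of n "n+3"]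
        sum_distrib_left sum_subtractf sum.distrib)
  also have "\<dots> = (\<Sum>k\<in>?S. g n (Suc k) - g n k)"
  proof (rule sum.cong)
    fix k assume "k \<in> ?S"
    then have "k \<le> n + 3" by simp
    from term_id[OF this] show "(real n + 3) * tt (n+3) k - (7 * real n + 13) * tt (n+2) k + (7 * real n + 15) * tt (n+1) k - (real n + 1) * tt n k = g n (Suc k) - g n k"
      by simp
  qed simp
  also have "\<dots> = g n (Suc (n+3)) - g n 0"
    by (rule sum_Suc_diff) simp
  also have "\<dots> = 0" by (simp add: g_def)
  finally show ?thesis by linarith
qed



lemma step_lower:
  fixes m L x y z w :: real
  assumes m: "m \<ge> 4" and L1: "L \<ge> 5.828" and L2: "L < 6" and Lsq: "L * L = 6 * L - 1"
    and x: "x > 0" and y: "y > 0" and z: "z > 0"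
    and hxy: "y \<le> L * x" and hyz: "L * (m + 1) / (m + 3) * y \<le> z"
    and rec: "(m + 3) * w = (7 * m + 13) * z - (7 * m + 15) * y + (m + 1) * x"
  shows "L * (m + 2) / (m + 4) * z \<le> w"
proof -
  have inv: "L * (6 - L) = 1" using Lsq by (simp add: algebra_simps)
  have h1: "(6 - L) * y \<le> x"
  proof -
    have "(6 - L) * y \<le> (6 - L) * (L * x)" using hxy L2 by (intro mult_left_mono) auto
    also have "\<dots> = (L * (6 - L)) * x" by (simp add: algebra_simps)
    also have "\<dots> = x" using inv by simp
    finally show ?thesis .
  qed
  have h2: "(m + 1) * y \<le> (m + 3) * (6 - L) * z"
  proof -
    have "L * (m + 1) * y \<le> (m + 3) * z" using hyz m by (simp add: field_simps)
    then have "(6 - L) * (L * (m + 1) * y) \<le> (6 - L) * ((m + 3) * z)" using L2 by (intro mult_left_mono) auto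
    moreover have "(6 - L) * (L * (m + 1) * y) = (L * (6 - L)) * ((m + 1) * y)" by (simp add: algebra_simps)
    ultimately have "(L * (6 - L)) * ((m + 1) * y) \<le> (6 - L) * ((m + 3) * z)" by linarith
    then have "(m + 1) * y \<le> (6 - L) * ((m + 3) * z)" unfolding inv by simp
    then show ?thesis by (simp add: algebra_simps)
  qed
  have "(m+1)*(m+4)*((m + 3) * w) \<ge> (m+1)*(m+4)*((7 * m + 13) * z - (7 * m + 15) * y + (m + 1) * ((6 - L) * y))"
  proof -
    have "(m + 1) * ((6 - L) * y) \<le> (m + 1) * x" using h1 m by (intro mult_left_mono) auto
    then show ?thesis unfolding rec using m by (intro mult_left_mono) auto
  qed
  moreover have "(m+1)*(m+4)*((7 * m + 13) * z - (7 * m + 15) * y + (m + 1) * ((6 - L) * y))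
      = (m+1)*(m+4)*(7*m+13) * z - (m+4)*(m+9+(m+1)*L) * ((m+1)*y)"
    by (simp add: algebra_simps)
  moreover have "(m+4)*(m+9+(m+1)*L) * ((m+1)*y) \<le> (m+4)*(m+9+(m+1)*L) * ((m + 3) * (6 - L) * z)"
    using h2 m L1 by (intro mult_left_mono) auto
  moreover have "(m+4)*(m+9+(m+1)*L) * ((m + 3) * (6 - L) * z) = z * ((m+4)*(m+3)*(7*m+55-(m+9)*L))"
  proof -
    have "(m+4)*(m+9+(m+1)*L) * ((m + 3) * (6 - L) * z) = z * ((m+4)*(m+3)*((m+9)*6 + (m+1)*6*L - (m+9)*L - (m+1)*(L*L)))"
      by (simp add: algebra_simps)
    also have "\<dots> = z * ((m+4)*(m+3)*(7*m+55-(m+9)*L))" unfolding Lsq by (simp add: algebra_simps)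
    finally show ?thesis .
  qed
  ultimately have A: "(m+1)*(m+4)*((m + 3) * w) \<ge> z * ((m+1)*(m+4)*(7*m+13) - (m+4)*(m+3)*(7*m+55-(m+9)*L))"
    by (simp add: algebra_simps)
  have poly: "(m+1)*(m+4)*(7*m+13) - (m+4)*(m+3)*(7*m+55-(m+9)*L) - (m+1)*(m+2)*(m+3)*L
       = L*(m+3)*(10*m+34) - (56*m^2+376*m+608)"
    by (simp add: algebra_simps power2_eq_square)
  have "L*(m+3)*(10*m+34) \<ge> 5.828*(m+3)*(10*m+34)"
    using L1 m by (intro mult_right_mono) auto
  moreover have "5.828*(m+3)*(10*m+34) \<ge> 56*m^2+376*m+608"
  proof -
    have "5.828*(m+3)*(10*m+34) - (56*m^2+376*m+608) = 2.28*m^2 - 3.008*m - 13.544"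
      by (simp add: algebra_simps power2_eq_square)
    moreover have "2.28*m^2 - 3.008*m - 13.544 \<ge> 0"
    proof -
      have "m * m \<ge> 4 * m" using m by (intro mult_right_mono) auto
      then show ?thesis using m by (simp add: power2_eq_square) (use \<open>m * m \<ge> 4 * m\<close> in linarith)
    qed
    ultimately show ?thesis by linarith
  qed
  ultimately have B: "(m+1)*(m+4)*(7*m+13) - (m+4)*(m+3)*(7*m+55-(m+9)*L) \<ge> (m+1)*(m+2)*(m+3)*L"
    using poly by linarith
  have "(m+1)*(m+4)*((m + 3) * w) \<ge> z * ((m+1)*(m+2)*(m+3)*L)"
    using A B z by (meson mult_left_mono less_imp_le order_trans)
  then have "((m+1)*(m+3)) * ((m+4) * w) \<ge> ((m+1)*(m+3)) * (L*(m+2)*z)"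
    by (simp add: algebra_simps)
  then have "(m+4) * w \<ge> L*(m+2)*z"
    using m by (simp add: mult_le_cancel_left_pos)
  then show ?thesis using m by (simp add: field_simps)
qed


lemma step_upper:
  fixes m L x y z w :: real
  assumes m: "m \<ge> 4" and L1: "L \<ge> 5.828" and L2: "L < 6" and Lsq: "L * L = 6 * L - 1"
    and x: "x > 0" and y: "y > 0" and z: "z > 0"
    and hxy: "L * m / (m + 2) * x \<le> y" and hyz: "z \<le> L * y"
    and rec: "(m + 3) * w = (7 * m + 13) * z - (7 * m + 15) * y + (m + 1) * x"
  shows "w \<le> L * z"
proof -
  have inv: "L * (6 - L) = 1" using Lsq by (simp add: algebra_simps)
  have u1: "m * x \<le> (m + 2) * (6 - L) * y"
  proof -
    have "L * m * x \<le> (m + 2) * y" using hxy m by (simp add: field_simps)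
    then have "(6 - L) * (L * m * x) \<le> (6 - L) * ((m + 2) * y)" using L2 by (intro mult_left_mono) auto
    moreover have "(6 - L) * (L * m * x) = (L * (6 - L)) * (m * x)" by (simp add: algebra_simps)
    ultimately have "(L * (6 - L)) * (m * x) \<le> (6 - L) * ((m + 2) * y)" by linarith
    then have "m * x \<le> (6 - L) * ((m + 2) * y)" unfolding inv by simp
    then show ?thesis by (simp add: algebra_simps)
  qed
  have u2: "(6 - L) * z \<le> y"
  proof -
    have "(6 - L) * z \<le> (6 - L) * (L * y)" using hyz L2 by (intro mult_left_mono) auto
    also have "\<dots> = (L * (6 - L)) * y" by (simp add: algebra_simps)
    also have "\<dots> = y" using inv by simp
    finally show ?thesis .
  qed
  define cy where "cy = m * (7 * m + 15) - (m + 1) * (m + 2) * (6 - L)"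
  have cy0: "cy \<ge> 0"
  proof -
    have "(m + 1) * (m + 2) * (6 - L) \<le> (m + 1) * (m + 2) * 1"
      using L1 m by (intro mult_left_mono) auto
    moreover have "(m + 1) * (m + 2) \<le> m * (7 * m + 15)"
    proof -
      have "m * m \<ge> 4 * m" using m by (intro mult_right_mono) auto
      then show ?thesis using m by (simp add: algebra_simps) (use \<open>m * m \<ge> 4 * m\<close> in linarith)
    qed
    ultimately show ?thesis unfolding cy_def by linarith
  qed
  have "m * ((m + 3) * w) \<le> m * (7 * m + 13) * z - cy * y"
  proof -
    have "(m + 1) * (m * x) \<le> (m + 1) * ((m + 2) * (6 - L) * y)" using u1 m by (intro mult_left_mono) auto
    then show ?thesis unfolding rec cy_def by (simp add: algebra_simps)
  qed
  also have "\<dots> \<le> m * (7 * m + 13) * z - cy * ((6 - L) * z)"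
    using u2 cy0 by (simp add: mult_left_mono)
  also have "\<dots> = z * (m * (7 * m + 13) - (m * (7 * m + 15) * (6 - L) - (m + 1) * (m + 2) * (36 - 12 * L + L * L)))"
    unfolding cy_def by (simp add: algebra_simps)
  also have "\<dots> = z * (m * (m + 3) * L + (28 * m + 70 - L * (6 * m + 12)))"
    unfolding Lsq by (simp add: algebra_simps)
  also have "\<dots> \<le> z * (m * (m + 3) * L)"
  proof -
    have "L * (6 * m + 12) \<ge> 5.828 * (6 * m + 12)" using L1 m by (intro mult_right_mono) auto
    then have "28 * m + 70 - L * (6 * m + 12) \<le> 0" using m by (simp add: algebra_simps)
    then show ?thesis using z by (simp add: mult_left_mono)
  qed
  finally have "(m * (m + 3)) * w \<le> (m * (m + 3)) * (L * z)" by (simp add: algebra_simps)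
  then show ?thesis using m by (simp add: mult_le_cancel_left_pos)
qed



definition LL :: real where "LL = 3 + 2 * sqrt 2"

lemma LL_sq: "LL * LL = 6 * LL - 1"
  unfolding LL_def by (simp add: algebra_simps)

lemma LL_lo: "LL \<ge> 5.828"
proof -
  have "1.414 \<le> sqrt 2" by (rule real_le_rsqrt) (simp add: power2_eq_square)
  then show ?thesis unfolding LL_def by simp
qed

lemma LL_hi: "LL \<le> 5.83"
proof -
  have "sqrt 2 \<le> 1.415" by (rule real_le_lsqrt) (simp_all add: power2_eq_square)
  then show ?thesis unfolding LL_def by simp
qed

lemma R0: "R 0 = -1" by (simp add: R_def)
lemma R1: "R 1 = 1" by (simp add: R_def)
lemma R2: "R 2 = 7" by (simp add: R_def numeral_2_eq_2)
lemma R1': "R (Suc 0) = 1" using R1 by simp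
lemma R2': "R (Suc (Suc 0)) = 7" using R2 by (simp add: numeral_2_eq_2)
lemma R3: "R 3 = 25" using R_rec[of 0] by (simp add: R0 R1' R2')
lemma R3': "R (Suc (Suc (Suc 0))) = 25" using R3 by (simp add: numeral_3_eq_3)
lemma R4: "R 4 = 87" using R_rec[of 1] by (simp add: R3' R1' R2')
lemma R5: "R 5 = 329" using R_rec[of 2] by (simp add: R3 R4 R2)
lemma R6: "R 6 = 1359" using R_rec[of 3] by (simp add: R3 R4 R5)
lemma R7: "R 7 = 6001" using R_rec[of 4] by (simp add: R6 R4 R5)
lemma R8: "R 8 = 27759" using R_rec[of 5] by (simp add: R6 R7 R5)


definition lo :: "nat \<Rightarrow> real" where "lo n = LL * real n / (real n + 2)"

definition P :: "nat \<Rightarrow> bool" where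
  "P n \<longleftrightarrow> R n > 0 \<and> R (n+1) > 0 \<and> R (n+2) > 0 \<and> lo n * R n \<le> R (n+1) \<and> R (n+1) \<le> LL * R n
     \<and> lo (n+1) * R (n+1) \<le> R (n+2) \<and> R (n+2) \<le> LL * R (n+1)"

lemma P6: "P 6"
  using LL_lo LL_hi unfolding P_def lo_def by (simp add: R6 R7 R8)

lemma P_step: assumes "n \<ge> 6" "P n" shows "P (n+1)"
proof -
  define m where "m = real n"
  have m: "m \<ge> 4" using assms(1) unfolding m_def by simp
  have L2: "LL < 6" using LL_hi by simp
  have rec: "(m + 3) * R (n+3) = (7 * m + 13) * R (n+2) - (7 * m + 15) * R (n+1) + (m + 1) * R n"
    using R_rec[of n] unfolding m_def by (simp add: add.assoc)
  from assms(2) have x: "R n > 0" and y: "R (n+1) > 0" and z: "R (n+2) > 0"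
    and h1: "LL * m / (m + 2) * R n \<le> R (n+1)" and h2: "R (n+1) \<le> LL * R n"
    and h3: "LL * (m + 1) / (m + 3) * R (n+1) \<le> R (n+2)" and h4: "R (n+2) \<le> LL * R (n+1)"
    unfolding P_def lo_def m_def by (auto simp: add.commute add.left_commute)
  have lw: "LL * (m + 2) / (m + 4) * R (n+2) \<le> R (n+3)"
    by (rule step_lower[OF m LL_lo L2 LL_sq x y z h2 h3 rec])
  have up: "R (n+3) \<le> LL * R (n+2)"
    by (rule step_upper[OF m LL_lo L2 LL_sq x y z h1 h4 rec])
  have pos: "R (n+3) > 0"
  proof -
    have "LL * (m + 2) / (m + 4) > 0" using m LL_lo by simp
    then have "LL * (m + 2) / (m + 4) * R (n+2) > 0" using z by (rule mult_pos_pos)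
    then show ?thesis using lw by linarith
  qed
  have e1: "lo (n+1) = LL * (m + 1) / (m + 3)" unfolding lo_def m_def by (simp add: algebra_simps)
  have e2: "lo (n+1+1) = LL * (m + 2) / (m + 4)" unfolding lo_def m_def by (simp add: algebra_simps)
  have e3: "n + 3 = Suc (Suc (Suc n))" by simp
  show ?thesis unfolding P_def e1 e2 using y z pos h3 h4 lw up
    by (simp add: add.assoc e3)
qed

lemma P_all: "n \<ge> 6 \<Longrightarrow> P n"
proof (induction n rule: nat_induct_at_least)
  case base then show ?case by (rule P6)
next
  case (Suc n) then show ?case using P_step[of n] by simp
qed


lemma Rpos: "n \<ge> 6 \<Longrightarrow> R n > 0" using P_all unfolding P_def by blast
lemma Rlo: "n \<ge> 6 \<Longrightarrow> lo n * R n \<le> R (n+1)" using P_all unfolding P_def by blast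
lemma Rhi: "n \<ge> 6 \<Longrightarrow> R (n+1) \<le> LL * R n" using P_all unfolding P_def by blast

lemma LL_pos: "LL > 0" using LL_lo by simp

lemma R_upper: "n \<ge> 6 \<Longrightarrow> R n \<le> 1359 * LL ^ (n - 6)"
proof (induction n rule: nat_induct_at_least)
  case base then show ?case by (simp add: R6)
next
  case (Suc n)
  have "R (Suc n) \<le> LL * R n" using Rhi[OF Suc.hyps] by simp
  also have "\<dots> \<le> LL * (1359 * LL ^ (n - 6))" using Suc.IH LL_pos by (intro mult_left_mono) auto
  also have "\<dots> = 1359 * LL ^ (Suc n - 6)" unfolding Suc_diff_le[OF Suc.hyps] power_Suc by (simp add: algebra_simps)
  finally show ?case .
qed

lemma R_lower: "n \<ge> 6 \<Longrightarrow> R n \<ge> 57078 * LL ^ (n - 6) / (real n * (real n + 1))"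
proof (induction n rule: nat_induct_at_least)
  case base then show ?case by (simp add: R6)
next
  case (Suc n)
  have lo0: "lo n \<ge> 0" unfolding lo_def using LL_pos by simp
  have "R (Suc n) \<ge> lo n * R n" using Rlo[OF Suc.hyps] by simp
  moreover have "lo n * R n \<ge> lo n * (57078 * LL ^ (n - 6) / (real n * (real n + 1)))"
    using Suc.IH lo0 by (intro mult_left_mono) auto
  moreover have "lo n * (57078 * LL ^ (n - 6) / (real n * (real n + 1))) = 57078 * LL ^ (Suc n - 6) / (real (Suc n) * (real (Suc n) + 1))"
  proof -
    have np: "real n \<noteq> 0" "real n + 1 \<noteq> 0" "real n + 2 \<noteq> 0" using Suc.hyps by auto
    show ?thesis unfolding lo_def Suc_diff_le[OF Suc.hyps] power_Suc using np by (simp add: divide_simps) (simp add: algebra_simps)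
  qed
  ultimately show ?case by linarith
qed

lemma root_cmp:
  assumes a: "p > 0" and b: "q > 0" and n: "n > 0" and h: "p ^ Suc n < q ^ n"
  shows "root n p < root (Suc n) q"
proof -
  define x where "x = root n p"
  define y where "y = root (Suc n) q"
  have x0: "x > 0" unfolding x_def using a n by (simp add: real_root_gt_zero)
  have y0: "y > 0" unfolding y_def using b by (simp add: real_root_gt_zero)
  have xa: "x ^ n = p" unfolding x_def using a n by simp
  have yb: "y ^ Suc n = q" unfolding y_def by (rule real_root_pow_pos2) (use b in auto)
  have "x ^ (n * Suc n) = p ^ Suc n" by (simp only: power_mult xa)
  also have "\<dots> < q ^ n" by (rule h)
  also have "\<dots> = y ^ (Suc n * n)" by (simp only: power_mult yb)
  also have "\<dots> = y ^ (n * Suc n)" by (simp only: mult.commute)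
  finally have "x ^ (n * Suc n) < y ^ (n * Suc n)" .
  then have "x < y" by (rule power_less_imp_less_base) (use y0 in simp)
  then show ?thesis unfolding x_def y_def .
qed

lemma exp2: "(1 + 2 / real n) ^ n \<le> 9"
proof (cases "n = 0")
  case True then show ?thesis by simp
next
  case False
  have "(1 + 2 / real n) ^ n \<le> exp (2 / real n) ^ n"
    by (intro power_mono) (auto intro: add_nonneg_nonneg)
  also have "\<dots> = exp (real n * (2 / real n))" by (rule exp_of_nat_mult[symmetric])
  also have "\<dots> = exp (real 2 * 1)" using False by simp
  also have "\<dots> = exp 1 ^ 2" by (rule exp_of_nat_mult)
  also have "\<dots> \<le> 3 ^ 2" by (intro power_mono exp_le) auto
  finally show ?thesis by simp
qed

lemma mono_big: assumes n: "n \<ge> 6" shows "R n ^ Suc n < R (Suc n) ^ n"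
proof -
  have Rn: "R n > 0" using Rpos[OF n] .
  have lo_eq: "lo n = LL / (1 + 2 / real n)" unfolding lo_def using n by (simp add: field_simps)
  have q0: "(1 + 2 / real n) ^ n > 0" by (intro zero_less_power) (simp add: add_pos_nonneg)
  have "lo n ^ n = LL ^ n / (1 + 2 / real n) ^ n" unfolding lo_eq by (simp add: power_divide)
  also have "\<dots> \<ge> LL ^ n / 9" using exp2[of n] q0 LL_pos by (intro divide_left_mono) auto
  finally have lon: "lo n ^ n \<ge> LL ^ n / 9" .
  have L6: "LL ^ 6 \<ge> 5.828 ^ 6" using LL_lo by (intro power_mono) auto
  have split: "LL ^ n = LL ^ 6 * LL ^ (n - 6)" using n by (simp add: power_add[symmetric])
  have pp: "LL ^ (n - 6) > 0" using LL_pos by simp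
  have "R n \<le> 1359 * LL ^ (n - 6)" by (rule R_upper[OF n])
  also have "\<dots> < (5.828 ^ 6 / 9) * LL ^ (n - 6)" using pp by (intro mult_strict_right_mono) (auto simp: power_divide)
  also have "\<dots> \<le> (LL ^ 6 / 9) * LL ^ (n - 6)" using L6 pp by (intro mult_right_mono) auto
  also have "\<dots> = LL ^ n / 9" by (simp add: split)
  also have "\<dots> \<le> lo n ^ n" by (rule lon)
  finally have Rlt: "R n < lo n ^ n" .
  have "R n ^ Suc n = R n * R n ^ n" by simp
  also have "\<dots> < lo n ^ n * R n ^ n" using Rlt Rn by (intro mult_strict_right_mono) auto
  also have "\<dots> = (lo n * R n) ^ n" by (simp add: power_mult_distrib)
  also have "\<dots> \<le> R (Suc n) ^ n"
    using Rlo[OF n] Rn LL_pos by (intro power_mono) (auto simp: lo_def)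
  finally show ?thesis .
qed


lemma mono_all: "n \<ge> 1 \<Longrightarrow> root n (R n) < root (Suc n) (R (Suc n))"
proof -
  assume n: "n \<ge> 1"
  consider "n = 1" | "n = 2" | "n = 3" | "n = 4" | "n = 5" | "n \<ge> 6" using n by linarith
  then show ?thesis
  proof cases
    case 1 then show ?thesis using root_cmp[of "R 1" "R 2" 1] by (simp add: R1 R2 R1' R2')
  next
    case 2 then show ?thesis using root_cmp[of "R 2" "R 3" 2] by (simp add: R3 R2)
  next
    case 3 then show ?thesis using root_cmp[of "R 3" "R 4" 3] by (simp add: R3 R4)
  next
    case 4 then show ?thesis using root_cmp[of "R 4" "R 5" 4] by (simp add: R5 R4)
  next
    case 5 then show ?thesis using root_cmp[of "R 5" "R 6" 5] by (simp add: R5 R6)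
  next
    case 6
    show ?thesis by (rule root_cmp[OF Rpos[OF 6] Rpos _ mono_big[OF 6]]) (use 6 in auto)
  qed
qed

lemma lim_all: "(\<lambda>n. root n (R n)) \<longlonglongrightarrow> LL"
proof -
  define c1 where "c1 = 57078 / (2 * LL ^ 6)"
  define c2 where "c2 = 1359 / LL ^ 6"
  have c1: "c1 > 0" unfolding c1_def using LL_pos by simp
  have c2: "c2 > 0" unfolding c2_def using LL_pos by simp
  define f where "f n = root n c1 * LL / root n (real n) ^ 2" for n
  define h where "h n = root n c2 * LL" for n
  have f: "f \<longlonglongrightarrow> LL"
  proof -
    have "(\<lambda>n. root n c1 * LL / root n (real n) ^ 2) \<longlonglongrightarrow> 1 * LL / 1 ^ 2"
      by (intro tendsto_intros LIMSEQ_root_const LIMSEQ_root c1) simp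
    then show ?thesis unfolding f_def by simp
  qed
  have h: "h \<longlonglongrightarrow> LL"
  proof -
    have "(\<lambda>n. root n c2 * LL) \<longlonglongrightarrow> 1 * LL"
      by (intro tendsto_intros LIMSEQ_root_const c2)
    then show ?thesis unfolding h_def by simp
  qed
  have ev1: "\<forall>\<^sub>F n in sequentially. f n \<le> root n (R n)"
    unfolding eventually_sequentially
  proof (intro exI allI impI)
    fix n :: nat assume n: "n \<ge> 6"
    have np: "n > 0" using n by simp
    have "c1 * LL ^ n / real n ^ 2 \<le> R n"
    proof -
      have split: "LL ^ n = LL ^ 6 * LL ^ (n - 6)" using n by (simp add: power_add[symmetric])
      have "c1 * LL ^ n / real n ^ 2 = 57078 * LL ^ (n - 6) / (2 * real n ^ 2)"
        unfolding c1_def split using LL_pos by (simp add: field_simps)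
      also have "\<dots> \<le> 57078 * LL ^ (n - 6) / (real n * (real n + 1))"
      proof (rule divide_left_mono)
        show "real n * (real n + 1) \<le> 2 * real n ^ 2" using n by (simp add: power2_eq_square algebra_simps)
        show "0 \<le> 57078 * LL ^ (n - 6)" using LL_pos by simp
        show "0 < 2 * real n ^ 2 * (real n * (real n + 1))" using np by simp
      qed
      also have "\<dots> \<le> R n" by (rule R_lower[OF n])
      finally show ?thesis .
    qed
    then have "root n (c1 * LL ^ n / real n ^ 2) \<le> root n (R n)" using np by simp
    moreover have "root n (c1 * LL ^ n / real n ^ 2) = f n"
      unfolding f_def using np LL_pos
      by (simp add: real_root_mult real_root_divide real_root_power real_root_power_cancel)
    ultimately show "f n \<le> root n (R n)" by simp
  qed
  have ev2: "\<forall>\<^sub>F n in sequentially. root n (R n) \<le> h n"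
    unfolding eventually_sequentially
  proof (intro exI allI impI)
    fix n :: nat assume n: "n \<ge> 6"
    have np: "n > 0" using n by simp
    have "R n \<le> c2 * LL ^ n"
    proof -
      have split: "LL ^ n = LL ^ 6 * LL ^ (n - 6)" using n by (simp add: power_add[symmetric])
      have "R n \<le> 1359 * LL ^ (n - 6)" by (rule R_upper[OF n])
      also have "\<dots> = c2 * LL ^ n" unfolding c2_def split using LL_pos by (simp add: field_simps)
      finally show ?thesis .
    qed
    then have "root n (R n) \<le> root n (c2 * LL ^ n)" using np by simp
    moreover have "root n (c2 * LL ^ n) = h n"
      unfolding h_def using np LL_pos
      by (simp add: real_root_mult real_root_power_cancel)
    ultimately show "root n (R n) \<le> h n" by simp
  qed
  show ?thesis by (rule tendsto_sandwich[OF ev1 ev2 f h])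
qed

theorem corollary4p3:
  shows "(\<forall>n\<ge>1. root n (R n) < root (Suc n) (R (Suc n)))
         \<and> (\<lambda>n. root n (R n)) \<longlonglongrightarrow> 3 + 2 * sqrt 2"
  using mono_all lim_all unfolding LL_def by blast


end
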